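(* Consider the averaged Ćuk converter $$-L_1\dot I_1=(1-u)V_1-V_s,\quad -L_2\dot I_2=uV_1+V_2,\quad C_1\dot V_1=(1-u)I_1+uI_2,\quad C_2\dot V_2=I_2-GV_2,$$ with scalar constants $L_1,L_2,C_1,C_2>0$, $G\ge0$, $V_s\in\mathbb{R}$, extended by $\dot u=\upsilon$. Let $I=(I_1,I_2)$, $V=(V_1,V_2)$, $L=\mathrm{diag}(L_1,L_2)$, $C=\mathrm{diag}(C_1,C_2)$. Then this system is passive with respect to the storage function $S=\tfrac12\dot I^\top L\dot I+\tfrac12\dot V^\top C\dot V$ and the port-variables $\dot u$ and $y=\dot V_1(I_2-I_1)-V_1(\dot I_2-\dot I_1)$, i.e. $\dot S\le\dot u\,y$.
   Context: $I_1,I_2$ are inductor currents, $V_1,V_2$ capacitor voltages, $u\in[0,1]$ the duty cycle (averaged model). *)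

theory Defs
  imports Complex_Main
begin

end

theory Submission
  imports Defs
begin

theorem lemma6:
  fixes L1 L2 C1 C2 G Vs :: real
    and I1 I2 V1 V2 u dI1 dI2 dV1 dV2 du :: "real \<Rightarrow> real"
  assumes pos: "L1 > 0" "L2 > 0" "C1 > 0" "C2 > 0" and G: "G \<ge> 0"
    and dI1: "\<And>t. (I1 has_real_derivative dI1 t) (at t)"
    and dI2: "\<And>t. (I2 has_real_derivative dI2 t) (at t)"
    and dV1: "\<And>t. (V1 has_real_derivative dV1 t) (at t)"
    and dV2: "\<And>t. (V2 has_real_derivative dV2 t) (at t)"
    and du: "\<And>t. (u has_real_derivative du t) (at t)"
    and u01: "\<And>t. 0 \<le> u t \<and> u t \<le> 1"
    and eq1: "\<And>t. - L1 * dI1 t = (1 - u t) * V1 t - Vs"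
    and eq2: "\<And>t. - L2 * dI2 t = u t * V1 t + V2 t"
    and eq3: "\<And>t. C1 * dV1 t = (1 - u t) * I1 t + u t * I2 t"
    and eq4: "\<And>t. C2 * dV2 t = I2 t - G * V2 t"
  shows "\<forall>t. \<exists>dS.
     ((\<lambda>s. (L1 * (dI1 s)\<^sup>2 + L2 * (dI2 s)\<^sup>2) / 2 + (C1 * (dV1 s)\<^sup>2 + C2 * (dV2 s)\<^sup>2) / 2)
        has_real_derivative dS) (at t)
     \<and> dS \<le> du t * (dV1 t * (I2 t - I1 t) - V1 t * (dI2 t - dI1 t))"
proof
  fix t
  have f1: "dI1 = (\<lambda>s. (Vs - (1 - u s) * V1 s) / L1)"
    using eq1 pos by (auto simp: fun_eq_iff field_simps)
  have f2: "dI2 = (\<lambda>s. - (u s * V1 s + V2 s) / L2)"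
    proof
    fix s show "dI2 s = - (u s * V1 s + V2 s) / L2"
      using eq2[of s] pos by (simp add: field_simps)
  qed
  have f3: "dV1 = (\<lambda>s. ((1 - u s) * I1 s + u s * I2 s) / C1)"
    using eq3 pos by (auto simp: fun_eq_iff field_simps)
  have f4: "dV2 = (\<lambda>s. (I2 s - G * V2 s) / C2)"
    using eq4 pos by (auto simp: fun_eq_iff field_simps)
  define S where "S = (\<lambda>s. (L1 * (dI1 s)\<^sup>2 + L2 * (dI2 s)\<^sup>2) / 2 + (C1 * (dV1 s)\<^sup>2 + C2 * (dV2 s)\<^sup>2) / 2)"
  define a1 where "a1 = (du t * V1 t - (1 - u t) * dV1 t) / L1"
  define a2 where "a2 = - (du t * V1 t + u t * dV1 t + dV2 t) / L2"
  define b1 where "b1 = (- du t * I1 t + (1 - u t) * dI1 t + du t * I2 t + u t * dI2 t) / C1"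
  define b2 where "b2 = (dI2 t - G * dV2 t) / C2"
  have d1: "(dI1 has_real_derivative a1) (at t)"
    unfolding a1_def f1[symmetric] apply (subst f1)
    by (rule derivative_eq_intros du dV1 refl)+ (use pos in \<open>auto simp: field_simps f1\<close>)
  have d2: "(dI2 has_real_derivative a2) (at t)"
    unfolding a2_def apply (subst f2)
    by (rule derivative_eq_intros du dV1 dV2 refl)+ (use pos in \<open>auto simp: field_simps\<close>)
  have d3: "(dV1 has_real_derivative b1) (at t)"
    unfolding b1_def apply (subst f3)
    by (rule derivative_eq_intros du dI1 dI2 refl)+ (use pos in \<open>auto simp: field_simps\<close>)
  have d4: "(dV2 has_real_derivative b2) (at t)"
    unfolding b2_def apply (subst f4)
    by (rule derivative_eq_intros dI2 dV2 refl)+ (use pos in \<open>auto simp: field_simps\<close>)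
  define dS where "dS = L1 * dI1 t * a1 + L2 * dI2 t * a2 + C1 * dV1 t * b1 + C2 * dV2 t * b2"
  have D: "(S has_real_derivative dS) (at t)"
    unfolding S_def dS_def
    by (auto intro!: derivative_eq_intros d1 d2 d3 d4 simp: field_simps)
  have E: "dS = du t * (dV1 t * (I2 t - I1 t) - V1 t * (dI2 t - dI1 t)) - G * (dV2 t)\<^sup>2"
    unfolding dS_def a1_def a2_def b1_def b2_def using pos
    by (simp add: field_simps power2_eq_square)
  have "dS \<le> du t * (dV1 t * (I2 t - I1 t) - V1 t * (dI2 t - dI1 t))"
    using E G by (simp add: mult_nonneg_nonneg)
  then show "\<exists>dS.
     ((\<lambda>s. (L1 * (dI1 s)\<^sup>2 + L2 * (dI2 s)\<^sup>2) / 2 + (C1 * (dV1 s)\<^sup>2 + C2 * (dV2 s)\<^sup>2) / 2)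
        has_real_derivative dS) (at t)
     \<and> dS \<le> du t * (dV1 t * (I2 t - I1 t) - V1 t * (dI2 t - dI1 t))"
    using D unfolding S_def by blast
qed

end
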